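(* Let $\Gamma_N\subset\mathbb{Z}^2$ be an $N\times N$ square domain, $N\ge 1$. If $N+1$ is prime, then the sandpile group $G_{\Gamma_N}$ has a cyclic subgroup isomorphic to $\mathbb{Z}/(N+1)\mathbb{Z}$, of order $N+1$.
   Context: An $N\times N$ square domain is a set $\{a,\dots,a+N-1\}\times\{b,\dots,b+N-1\}\subset\mathbb{Z}^2$. For finite $\Gamma\subset\mathbb{Z}^2$, the reduced Laplacian is $(\Delta_\Gamma f)(v)=\sum_{w\in\Gamma,\,w\sim v}f(w)-4f(v)$ (nearest-neighbor adjacency in $\mathbb{Z}^2$; all vertices outside $\Gamma$ are contracted to a sink), and the sandpile group is $G_\Gamma=\mathbb{Z}^\Gamma/\Delta_\Gamma(\mathbb{Z}^\Gamma)$. *)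

theory Defs
  imports "HOL-Algebra.Algebra"
begin

definition square_domain :: "int \<Rightarrow> int \<Rightarrow> nat \<Rightarrow> (int \<times> int) set" where
  "square_domain a b N = {a..<a + int N} \<times> {b..<b + int N}"

definition adj :: "int \<times> int \<Rightarrow> int \<times> int \<Rightarrow> bool" where
  "adj v w \<longleftrightarrow> \<bar>fst v - fst w\<bar> + \<bar>snd v - snd w\<bar> = 1"

definition lattice_group :: "(int \<times> int) set \<Rightarrow> ((int \<times> int) \<Rightarrow> int) monoid" where
  "lattice_group \<Gamma> = \<lparr> carrier = {f. \<forall>v. v \<notin> \<Gamma> \<longrightarrow> f v = 0},
                        monoid.mult = (\<lambda>f g v. f v + g v),
                        monoid.one = (\<lambda>v. 0) \<rparr>"

text \<open>Reduced Laplacian (sink = everything outside Gamma).\<close>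
definition reduced_laplacian :: "(int \<times> int) set \<Rightarrow> ((int \<times> int) \<Rightarrow> int) \<Rightarrow> (int \<times> int) \<Rightarrow> int" where
  "reduced_laplacian \<Gamma> f v =
     (if v \<in> \<Gamma> then (\<Sum>w\<in>{w\<in>\<Gamma>. adj w v}. f w) - 4 * f v else 0)"

definition sandpile_group :: "(int \<times> int) set \<Rightarrow> ((int \<times> int) \<Rightarrow> int) set monoid" where
  "sandpile_group \<Gamma> =
     lattice_group \<Gamma> Mod (reduced_laplacian \<Gamma> ` carrier (lattice_group \<Gamma>))"

end

theory Submission
  imports Defs
begin

lemma lattice_comm_group: "comm_group (lattice_group \<Gamma>)"
proof (rule comm_groupI)
  fix x assume "x \<in> carrier (lattice_group \<Gamma>)"
  then show "\<exists>y\<in>carrier (lattice_group \<Gamma>). y \<otimes>\<^bsub>lattice_group \<Gamma>\<^esub> x = \<one>\<^bsub>lattice_group \<Gamma>\<^esub>"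
    by (intro bexI[of _ "\<lambda>v. - x v"]) (auto simp: lattice_group_def)
qed (auto simp: lattice_group_def algebra_simps)

lemma lattice_pow: "f \<in> carrier (lattice_group \<Gamma>) \<Longrightarrow> f [^]\<^bsub>lattice_group \<Gamma>\<^esub> (n::nat) = (\<lambda>v. int n * f v)"
  by (induction n) (auto simp: lattice_group_def algebra_simps)

lemma lap_carrier: "reduced_laplacian \<Gamma> f \<in> carrier (lattice_group \<Gamma>)"
  by (simp add: lattice_group_def reduced_laplacian_def)

lemma lap_add: "reduced_laplacian \<Gamma> (\<lambda>v. f v + g v) = (\<lambda>v. reduced_laplacian \<Gamma> f v + reduced_laplacian \<Gamma> g v)"
  by (auto simp: reduced_laplacian_def sum.distrib fun_eq_iff)

lemma lap_lin: "reduced_laplacian \<Gamma> (\<lambda>v. f v - c * g v) = (\<lambda>v. reduced_laplacian \<Gamma> f v - c * reduced_laplacian \<Gamma> g v)"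
  by (auto simp: reduced_laplacian_def sum_subtractf sum_distrib_left fun_eq_iff algebra_simps)

lemma lap_hom: "reduced_laplacian \<Gamma> \<in> hom (lattice_group \<Gamma>) (lattice_group \<Gamma>)"
  by (rule homI) (auto simp: lap_carrier lap_add lattice_group_def reduced_laplacian_def)

lemma lap_subgroup: "subgroup (reduced_laplacian \<Gamma> ` carrier (lattice_group \<Gamma>)) (lattice_group \<Gamma>)"
proof -
  have "group_hom (lattice_group \<Gamma>) (lattice_group \<Gamma>) (reduced_laplacian \<Gamma>)"
    using lattice_comm_group lap_hom
    by (simp add: group_hom_def group_hom_axioms_def comm_group.axioms(2))
  then show ?thesis by (rule group_hom.img_is_subgroup)
qed

lemma cyclic_sub:
  fixes G (structure)
  assumes G: "group G" and c: "c \<in> carrier G" and p: "Factorial_Ring.prime (p::nat)"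
    and cp: "c [^]\<^bsub>G\<^esub> p = \<one>\<^bsub>G\<^esub>" and c1: "c \<noteq> \<one>\<^bsub>G\<^esub>"
  shows "\<exists>H. subgroup H G \<and> G\<lparr>carrier := H\<rparr> \<cong> integer_mod_group p"
proof -
  interpret group G by (rule G)
  have "ord c dvd p" using cp c pow_eq_id by blast
  moreover have "ord c \<noteq> 1" using c1 c ord_eq_1 by blast
  ultimately have o: "ord c = p" using p prime_nat_iff by blast
  define H where "H = range (\<lambda>n::int. c [^] n)"
  have sH: "subgroup H G" unfolding H_def using c subgroup_of_powers by blast
  have p0: "p > 0" using p prime_gt_0_nat by blast
  let ?phi = "\<lambda>i::int. c [^] i"
  have "?phi \<in> iso (integer_mod_group p) (G\<lparr>carrier := H\<rparr>)"
  proof (rule isoI)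
    show "?phi \<in> hom (integer_mod_group p) (G\<lparr>carrier := H\<rparr>)"
    proof (rule homI)
      fix x assume "x \<in> carrier (integer_mod_group p)"
      then show "?phi x \<in> carrier (G\<lparr>carrier := H\<rparr>)" by (simp add: H_def)
    next
      fix x y assume "x \<in> carrier (integer_mod_group p)" "y \<in> carrier (integer_mod_group p)"
      have "c [^] ((x + y) mod int p) = c [^] (x + y)"
        unfolding int_pow_eq[OF c] o by (simp add: mod_eq_dvd_iff[symmetric])
      then show "?phi (x \<otimes>\<^bsub>integer_mod_group p\<^esub> y) = ?phi x \<otimes>\<^bsub>G\<lparr>carrier := H\<rparr>\<^esub> ?phi y"
        by (simp add: int_pow_mult c)
    qed
  next
    show "bij_betw ?phi (carrier (integer_mod_group p)) (carrier (G\<lparr>carrier := H\<rparr>))"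
      unfolding bij_betw_def
    proof
      show "inj_on ?phi (carrier (integer_mod_group p))"
      proof (rule inj_onI)
        fix x y assume "x \<in> carrier (integer_mod_group p)" "y \<in> carrier (integer_mod_group p)"
          and "?phi x = ?phi y"
        then have "int p dvd (y - x)" "0 \<le> x" "x < p" "0 \<le> y" "y < p"
          using int_pow_eq[OF c] o p0 by (auto simp: carrier_integer_mod_group)
        then have "y mod int p = x mod int p" by (simp only: mod_eq_dvd_iff)
        then show "x = y" using \<open>0 \<le> x\<close> \<open>x < p\<close> \<open>0 \<le> y\<close> \<open>y < p\<close> by simp
      qed
      show "?phi ` carrier (integer_mod_group p) = carrier (G\<lparr>carrier := H\<rparr>)"
      proof
        show "?phi ` carrier (integer_mod_group p) \<subseteq> carrier (G\<lparr>carrier := H\<rparr>)" by (auto simp: H_def)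
        show "carrier (G\<lparr>carrier := H\<rparr>) \<subseteq> ?phi ` carrier (integer_mod_group p)"
        proof
          fix z assume "z \<in> carrier (G\<lparr>carrier := H\<rparr>)"
          then obtain n :: int where z: "z = c [^] n" by (auto simp: H_def)
          have "c [^] n = c [^] (n mod int p)"
            unfolding int_pow_eq[OF c] o by (simp add: mod_eq_dvd_iff[symmetric])
          moreover have "n mod int p \<in> carrier (integer_mod_group p)"
            using p0 by (simp add: carrier_integer_mod_group)
          ultimately show "z \<in> ?phi ` carrier (integer_mod_group p)" using z by blast
        qed
      qed
    qed
  qed
  then have "integer_mod_group p \<cong> G\<lparr>carrier := H\<rparr>" unfolding is_iso_def by blast
  then have "G\<lparr>carrier := H\<rparr> \<cong> integer_mod_group p"
    using group.iso_sym group_integer_mod_group by blast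
  with sH show ?thesis by blast
qed

lemma nbr:
  assumes w: "w \<in> carrier (lattice_group \<Gamma>)" and v: "(x, y) \<in> \<Gamma>"
  shows "reduced_laplacian \<Gamma> w (x, y) = w (x+1, y) + w (x - 1, y) + w (x, y+1) + w (x, y - 1) - 4 * w (x, y)"
proof -
  let ?N = "{(x+1, y), (x - 1, y), (x, y+1), (x, y - 1)}"
  have e: "{u\<in>\<Gamma>. adj u (x, y)} = \<Gamma> \<inter> ?N"
    by (auto simp: adj_def abs_if split: if_splits)
  have w0: "\<And>u. u \<notin> \<Gamma> \<Longrightarrow> w u = 0" using w by (auto simp: lattice_group_def)
  have "(\<Sum>u\<in>\<Gamma> \<inter> ?N. w u) = (\<Sum>u\<in>?N. w u)"
    by (rule sum.mono_neutral_left) (auto simp: w0)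
  also have "\<dots> = w (x+1, y) + w (x - 1, y) + w (x, y+1) + w (x, y - 1)"
    by simp
  finally show ?thesis using v e by (simp add: reduced_laplacian_def)
qed

lemma maxp:
  assumes fin: "finite \<Gamma>" and w: "w \<in> carrier (lattice_group \<Gamma>)"
    and h: "\<And>v. v \<in> \<Gamma> \<Longrightarrow> reduced_laplacian \<Gamma> w v = 0"
  shows "\<forall>v\<in>\<Gamma>. w v \<le> 0"
proof (rule ccontr)
  assume "\<not> ?thesis"
  then obtain v0 where v0: "v0 \<in> \<Gamma>" "w v0 > 0" by force
  define M where "M = Max (w ` \<Gamma>)"
  have Mge: "\<And>u. u \<in> \<Gamma> \<Longrightarrow> w u \<le> M" using fin by (simp add: M_def)
  have MG: "M \<in> w ` \<Gamma>" using fin v0 unfolding M_def by (intro Max_in) auto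
  have M0: "M > 0" using Mge[OF v0(1)] v0(2) by simp
  define S where "S = {u\<in>\<Gamma>. w u = M}"
  have finS: "finite S" using fin by (simp add: S_def)
  have neS: "S \<noteq> {}" using MG by (auto simp: S_def)
  define mx where "mx = Max (fst ` S)"
  have "mx \<in> fst ` S" using finS neS by (simp add: mx_def)
  then obtain x y where xy: "(x, y) \<in> S" "x = mx" by force
  have mxge: "\<And>u. u \<in> S \<Longrightarrow> fst u \<le> mx" using finS by (simp add: mx_def)
  have w0: "\<And>u. u \<notin> \<Gamma> \<Longrightarrow> w u = 0" using w by (auto simp: lattice_group_def)
  have le: "\<And>u. w u \<le> M" using Mge w0 M0 by (metis less_le_not_le linorder_linear)
  have xyG: "(x, y) \<in> \<Gamma>" "w (x, y) = M" using xy by (auto simp: S_def)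
  have lt: "w (x+1, y) < M"
  proof (cases "(x+1, y) \<in> \<Gamma>")
    case True
    have "(x+1, y) \<notin> S" using mxge[of "(x+1, y)"] xy by auto
    then show ?thesis using True le[of "(x+1,y)"] by (auto simp: S_def)
  next
    case False then show ?thesis using w0 M0 by simp
  qed
  have "reduced_laplacian \<Gamma> w (x, y) < 0"
    using nbr[OF w xyG(1)] lt le[of "(x - 1, y)"] le[of "(x, y+1)"] le[of "(x, y - 1)"] xyG(2) by linarith
  with h[OF xyG(1)] show False by simp
qed

lemma lap_inj:
  assumes fin: "finite \<Gamma>" and w: "w \<in> carrier (lattice_group \<Gamma>)"
    and h: "\<And>v. v \<in> \<Gamma> \<Longrightarrow> reduced_laplacian \<Gamma> w v = 0"
    and v: "v \<in> \<Gamma>"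
  shows "w v = 0"
proof -
  have "w v \<le> 0" using maxp[OF fin w h] v by blast
  moreover have w': "(\<lambda>u. - w u) \<in> carrier (lattice_group \<Gamma>)" using w by (auto simp: lattice_group_def)
  have "reduced_laplacian \<Gamma> (\<lambda>u. - w u) u = 0" if "u \<in> \<Gamma>" for u
    using h[OF that] that by (simp add: reduced_laplacian_def sum_negf)
  then have "- w v \<le> 0" using maxp[OF fin w'] v by blast
  ultimately show ?thesis by simp
qed

lemma sq_lap:
  fixes a b :: int and N :: nat
  defines "\<Gamma> \<equiv> square_domain a b N"
  defines "g \<equiv> \<lambda>v. if v \<in> \<Gamma> then (fst v - a + 1) * (snd v - b + 1) else 0"
  defines "f \<equiv> \<lambda>v. if v \<in> \<Gamma> then - ((if fst v = a + int N - 1 then snd v - b + 1 else 0)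
                    + (if snd v = b + int N - 1 then fst v - a + 1 else 0)) else 0"
  shows "reduced_laplacian \<Gamma> g = (\<lambda>v. int (N + 1) * f v)"
proof
  fix v :: "int \<times> int"
  obtain x y where v: "v = (x, y)" by force
  have gc: "g \<in> carrier (lattice_group \<Gamma>)" by (simp add: g_def lattice_group_def)
  show "reduced_laplacian \<Gamma> g v = int (N + 1) * f v"
  proof (cases "v \<in> \<Gamma>")
    case False then show ?thesis by (simp add: reduced_laplacian_def f_def)
  next
    case True
    then have r: "a \<le> x" "x < a + int N" "b \<le> y" "y < b + int N" using v by (auto simp: \<Gamma>_def square_domain_def)
    show ?thesis unfolding v nbr[OF gc True[unfolded v]]
      using r by (cases "x = a"; cases "y = b"; cases "x = a + int N - 1"; cases "y = b + int N - 1")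
        (auto simp: g_def f_def \<Gamma>_def square_domain_def algebra_simps)
  qed
qed

theorem lemma4:
  fixes a b :: int and N :: nat
  assumes "N \<ge> 1" and "Factorial_Ring.prime (N + 1)"
  shows "\<exists>H. subgroup H (sandpile_group (square_domain a b N)) \<and>
             (sandpile_group (square_domain a b N))\<lparr>carrier := H\<rparr> \<cong> integer_mod_group (N + 1)"
proof -
  define \<Gamma> where "\<Gamma> = square_domain a b N"
  define g where "g = (\<lambda>v. if v \<in> \<Gamma> then (fst v - a + 1) * (snd v - b + 1) else 0)"
  define f where "f = (\<lambda>v. if v \<in> \<Gamma> then - ((if fst v = a + int N - 1 then snd v - b + 1 else 0)
                    + (if snd v = b + int N - 1 then fst v - a + 1 else 0)) else 0)"
  define LG where "LG = lattice_group \<Gamma>"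
  define L where "L = reduced_laplacian \<Gamma> ` carrier LG"
  define p where "p = N + 1"
  have lapg: "reduced_laplacian \<Gamma> g = (\<lambda>v. int p * f v)"
    unfolding \<Gamma>_def g_def f_def p_def by (rule sq_lap)
  have fin: "finite \<Gamma>" by (simp add: \<Gamma>_def square_domain_def)
  have cg: "comm_group LG" by (simp add: LG_def lattice_comm_group)
  then have grp: "group LG" by (simp add: comm_group.axioms(2))
  have sL: "subgroup L LG" by (simp add: L_def LG_def lap_subgroup)
  have nL: "L \<lhd> LG" using cg sL by (simp add: comm_group.subgroup_imp_normal)
  have gq: "group (LG Mod L)" using nL by (rule normal.factorgroup_is_group)
  have hom: "(\<lambda>x. L #>\<^bsub>LG\<^esub> x) \<in> hom LG (LG Mod L)" using nL by (rule normal.r_coset_hom_Mod)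
  have fc: "f \<in> carrier LG" by (simp add: f_def LG_def lattice_group_def)
  have gc: "g \<in> carrier LG" by (simp add: g_def LG_def lattice_group_def)
  define c where "c = L #>\<^bsub>LG\<^esub> f"
  have cc: "c \<in> carrier (LG Mod L)" using hom fc unfolding c_def by (auto simp: hom_def)
  have "c [^]\<^bsub>LG Mod L\<^esub> p = L #>\<^bsub>LG\<^esub> (f [^]\<^bsub>LG\<^esub> p)"
    unfolding c_def using hom_nat_pow[OF hom fc grp gq] by simp
  also have "f [^]\<^bsub>LG\<^esub> p = reduced_laplacian \<Gamma> g"
    using lattice_pow fc lapg unfolding LG_def by simp
  also have "L #>\<^bsub>LG\<^esub> reduced_laplacian \<Gamma> g = L"
    using subgroup.rcos_const[OF sL grp] gc by (simp add: L_def)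
  finally have cp: "c [^]\<^bsub>LG Mod L\<^esub> p = \<one>\<^bsub>LG Mod L\<^esub>" by simp
  have c1: "c \<noteq> \<one>\<^bsub>LG Mod L\<^esub>"
  proof
    assume "c = \<one>\<^bsub>LG Mod L\<^esub>"
    then have "L #>\<^bsub>LG\<^esub> f = L" by (simp add: c_def)
    moreover have "f \<in> L #>\<^bsub>LG\<^esub> f" using group.rcos_self[OF grp fc sL] .
    ultimately have "f \<in> L" by simp
    then obtain u where u: "u \<in> carrier LG" "f = reduced_laplacian \<Gamma> u" by (auto simp: L_def)
    define w where "w = (\<lambda>v. g v - int p * u v)"
    have wc: "w \<in> carrier (lattice_group \<Gamma>)" using gc u(1) by (simp add: w_def LG_def lattice_group_def)
    have "reduced_laplacian \<Gamma> w = (\<lambda>v. reduced_laplacian \<Gamma> g v - int p * reduced_laplacian \<Gamma> u v)"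
      unfolding w_def by (rule lap_lin)
    also have "\<dots> = (\<lambda>v. 0)" using lapg u(2) by simp
    finally have "\<And>v. v \<in> \<Gamma> \<Longrightarrow> reduced_laplacian \<Gamma> w v = 0" by simp
    moreover have ab: "(a, b) \<in> \<Gamma>" using assms(1) by (simp add: \<Gamma>_def square_domain_def)
    ultimately have "w (a, b) = 0" using lap_inj[OF fin wc] by blast
    then have "1 = int p * u (a, b)" using ab by (simp add: w_def g_def)
    then have "int p dvd 1" by (metis dvd_triv_left)
    then show False using assms(1) by (simp add: p_def)
  qed
  have "\<exists>H. subgroup H (LG Mod L) \<and> (LG Mod L)\<lparr>carrier := H\<rparr> \<cong> integer_mod_group p"
    using cyclic_sub[OF gq cc _ cp c1] assms(2) by (simp add: p_def)
  then show ?thesis by (simp add: sandpile_group_def LG_def L_def \<Gamma>_def p_def)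
qed

end
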